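(* Let $n$, $k$ and $r$ be positive integers. Then $$V_k(n) \;=\; \sum_{i=0}^{r-1} Q_{rk}(n+ik) \;=\; Q_{rk}(n)+Q_{rk}(n+k)+\cdots+Q_{rk}(n+(r-1)k).$$
   Context: A partition of a positive integer $m$ is a non-increasing sequence of positive integers (its parts) summing to $m$. For positive integers $j,m$, $Q_j(m)$ denotes the total number of occurrences of the part $j$ among all partitions of $m$ (a partition in which $j$ appears $t$ times contributes $t$). $V_k(m)$ denotes the sum, over all partitions of $m$, of the number of distinct part sizes that occur $k$ or more times in that partition. *)

theory Defs
  imports Main "HOL-Library.Multiset"
begin

text \<open>A partition of m is represented as a multiset of positive integers (its parts)
  whose sum is m; the multiplicity of a part j is count p j.\<close>

definition partitions :: "nat \<Rightarrow> nat multiset set" where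
  "partitions m = {p. (\<forall>x\<in>#p. 0 < x) \<and> sum_mset p = m}"

definition Q :: "nat \<Rightarrow> nat \<Rightarrow> nat" where
  "Q j m = (\<Sum>p\<in>partitions m. count p j)"

definition V :: "nat \<Rightarrow> nat \<Rightarrow> nat" where
  "V k m = (\<Sum>p\<in>partitions m. card {j \<in> set_mset p. k \<le> count p j})"

end

theory Submission
  imports Defs
begin

lemma part_elem_le:
  assumes "p \<in> partitions m" "x \<in># p" shows "x \<le> m"
proof -
  have h: "sum_mset p = x + sum_mset (p - {#x#})"
    using assms(2) by (rule sum_mset.remove)
  have "sum_mset p = m" using assms(1) by (simp add: partitions_def)
  thus ?thesis using h by linarith
qed

lemma part_size_le:
  assumes "p \<in> partitions m" shows "size p \<le> m"
proof -
  have "size p = (\<Sum>a\<in>#p. 1)" by (rule size_eq_sum_mset)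
  also have "\<dots> \<le> (\<Sum>a\<in>#p. a)"
    using assms unfolding partitions_def
    by (intro sum_mset_mono) (auto simp: Suc_leI)
  finally show ?thesis using assms unfolding partitions_def by simp
qed

lemma finite_partitions: "finite (partitions m)"
proof -
  have "partitions m \<subseteq> (\<Union>s\<in>{0..m}. multisets_of_size {1..m} s)"
  proof
    fix p assume p: "p \<in> partitions m"
    have "set_mset p \<subseteq> {1..m}"
      using p part_elem_le[OF p] unfolding partitions_def by (auto simp: Suc_leI)
    thus "p \<in> (\<Union>s\<in>{0..m}. multisets_of_size {1..m} s)"
      using part_size_le[OF p] by (auto simp: multisets_of_size_def)
  qed
  thus ?thesis by (rule finite_subset) auto
qed

lemma sum_sub:
  assumes "replicate_mset t j \<subseteq># p"
  shows "sum_mset (p - replicate_mset t j) + t * j = sum_mset p"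
proof -
  have "p - replicate_mset t j + replicate_mset t j = p"
    using assms by (simp add: subset_mset.diff_add)
  hence "sum_mset (p - replicate_mset t j + replicate_mset t j) = sum_mset p" by simp
  thus ?thesis by (simp add: sum_mset.union)
qed

lemma rep_sub: "t \<le> count p j \<Longrightarrow> replicate_mset t j \<subseteq># p"
  by (simp add: subseteq_mset_def)

lemma count_le:
  assumes "p \<in> partitions m" shows "count p j * j \<le> m"
  using sum_sub[OF rep_sub[of "count p j" p j]] assms unfolding partitions_def by auto

lemma lemA:
  assumes "0 < j"
  shows "card {p\<in>partitions m. t \<le> count p j} =
    (if t*j \<le> m then card (partitions (m - t*j)) else 0)"
proof (cases "t*j \<le> m")
  case False
  have E: "{p\<in>partitions m. t \<le> count p j} = {}"
  proof (safe)
    fix p assume "p \<in> partitions m" "t \<le> count p j"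
    hence "t * j \<le> m" using count_le[of p m j] by (meson le_trans mult_le_mono1)
    thus "p \<in> {}" using False by simp
  qed
  show ?thesis unfolding E using False by simp
next
  case True
  have "bij_betw (\<lambda>q. q + replicate_mset t j) (partitions (m - t*j)) {p\<in>partitions m. t \<le> count p j}"
  proof (rule bij_betw_byWitness[where f'="\<lambda>p. p - replicate_mset t j"])
    show "\<forall>a\<in>partitions (m - t * j). a + replicate_mset t j - replicate_mset t j = a" by simp
    show "\<forall>a'\<in>{p \<in> partitions m. t \<le> count p j}. a' - replicate_mset t j + replicate_mset t j = a'"
      by (auto simp: subset_mset.diff_add rep_sub)
    show "(\<lambda>q. q + replicate_mset t j) ` partitions (m - t * j) \<subseteq> {p \<in> partitions m. t \<le> count p j}"
      using True assms by (auto simp: partitions_def split: if_splits)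
    show "(\<lambda>p. p - replicate_mset t j) ` {p \<in> partitions m. t \<le> count p j} \<subseteq> partitions (m - t * j)"
    proof (clarsimp)
      fix p assume p: "p \<in> partitions m" "t \<le> count p j"
      have "sum_mset (p - replicate_mset t j) + t * j = m"
        using sum_sub[OF rep_sub[OF p(2)]] p(1) unfolding partitions_def by simp
      moreover have "\<forall>x\<in>#p - replicate_mset t j. 0 < x"
        using p(1) unfolding partitions_def by (auto dest: in_diffD)
      ultimately show "p - replicate_mset t j \<in> partitions (m - t * j)"
        unfolding partitions_def by simp
    qed
  qed
  thus ?thesis using True by (simp add: bij_betw_same_card)
qed

lemma card_filter: "finite A \<Longrightarrow> card {x\<in>A. P x} = (\<Sum>x\<in>A. if P x then 1 else 0)"
  by (simp add: sum.inter_filter[symmetric])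

lemma lemB:
  assumes "0 < j"
  shows "Q j m = (\<Sum>t\<in>{1..m}. card {p\<in>partitions m. t \<le> count p j})"
proof -
  have "Q j m = (\<Sum>p\<in>partitions m. \<Sum>t\<in>{1..m}. if t \<le> count p j then 1 else 0)"
    unfolding Q_def
  proof (rule sum.cong[OF refl])
    fix p assume p: "p \<in> partitions m"
    have "count p j \<le> count p j * j" using assms by simp
    hence "count p j \<le> m" using count_le[OF p, of j] by linarith
    hence eq: "{t\<in>{1..m}. t \<le> count p j} = {1..count p j}" by auto
    have "count p j = card {t\<in>{1..m}. t \<le> count p j}" unfolding eq by simp
    also have "\<dots> = (\<Sum>t\<in>{1..m}. if t \<le> count p j then 1 else 0)"
      by (rule card_filter) simp
    finally show "count p j = (\<Sum>t\<in>{1..m}. if t \<le> count p j then 1 else 0)" .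
  qed
  also have "\<dots> = (\<Sum>t\<in>{1..m}. \<Sum>p\<in>partitions m. if t \<le> count p j then 1 else 0)"
    by (rule sum.swap)
  also have "\<dots> = (\<Sum>t\<in>{1..m}. card {p\<in>partitions m. t \<le> count p j})"
    by (simp add: card_filter finite_partitions)
  finally show ?thesis .
qed

lemma lemC:
  assumes "0 < k"
  shows "V k m = (\<Sum>j\<in>{1..m}. card {p\<in>partitions m. k \<le> count p j})"
proof -
  have "V k m = (\<Sum>p\<in>partitions m. \<Sum>j\<in>{1..m}. if k \<le> count p j then 1 else 0)"
    unfolding V_def
  proof (rule sum.cong[OF refl])
    fix p assume p: "p \<in> partitions m"
    have mem: "j \<in># p" if "k \<le> count p j" for j
      using that assms by (metis count_eq_zero_iff le_zero_eq not_gr0)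
    have eq: "{j \<in> set_mset p. k \<le> count p j} = {j\<in>{1..m}. k \<le> count p j}"
      using assms part_elem_le[OF p] p mem unfolding partitions_def
      by (auto simp: Suc_leI)
    show "card {j \<in> set_mset p. k \<le> count p j} = (\<Sum>j\<in>{1..m}. if k \<le> count p j then 1 else 0)"
      unfolding eq by (rule card_filter) simp
  qed
  also have "\<dots> = (\<Sum>j\<in>{1..m}. \<Sum>p\<in>partitions m. if k \<le> count p j then 1 else 0)"
    by (rule sum.swap)
  also have "\<dots> = (\<Sum>j\<in>{1..m}. card {p\<in>partitions m. k \<le> count p j})"
    by (simp add: card_filter finite_partitions)
  finally show ?thesis .
qed

theorem theorem2:
  fixes n k r :: nat
  assumes "0 < n" and "0 < k" and "0 < r"
  shows "V k n = (\<Sum>i<r. Q (r * k) (n + i * k))"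
proof -
  define f where "f s = (if s*k \<le> n then card (partitions (n - s*k)) else 0)" for s
  have f0: "f s = 0" if "n < s" for s
  proof -
    have "s \<le> s * k" using assms(2) by simp
    hence "\<not> s * k \<le> n" using that by linarith
    thus ?thesis unfolding f_def by simp
  qed
  have V: "V k n = (\<Sum>s\<in>{1..n}. f s)"
    unfolding lemC[OF assms(2)] f_def
    by (rule sum.cong[OF refl]) (simp add: lemA assms mult.commute)
  have Qi: "Q (r*k) (n + i*k) = (\<Sum>t\<in>{1..n}. f (t*r - i))" if i: "i < r" for i
  proof -
    have rk: "0 < r*k" using assms by simp
    have "Q (r*k) (n + i*k) = (\<Sum>t\<in>{1..n+i*k}. f (t*r - i))"
      unfolding lemB[OF rk]
    proof (rule sum.cong[OF refl])
      fix t assume t: "t \<in> {1..n+i*k}"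
      define a where "a = t*r"
      have "1 * r \<le> t * r" using t by (intro mult_le_mono1) auto
      hence ia: "i < a" using i unfolding a_def by linarith
      have e1: "(a - i)*k = a*k - i*k" by (simp add: diff_mult_distrib)
      have e2: "i*k \<le> a*k" using ia by simp
      have e3: "t*(r*k) = a*k" unfolding a_def by simp
      show "card {p \<in> partitions (n + i * k). t \<le> count p (r * k)} = f (t * r - i)"
      proof -
        have c: "a*k \<le> n+i*k \<longleftrightarrow> a*k - i*k \<le> n" using e2 by linarith
        have d: "n + i*k - a*k = n - (a*k - i*k)" using e2 by linarith
        show ?thesis unfolding lemA[OF rk] f_def e3 a_def[symmetric] e1 c d by simp
      qed
    qed
    also have "\<dots> = (\<Sum>t\<in>{1..n}. f (t*r - i))"
    proof (rule sum.mono_neutral_right)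
      show "\<forall>t\<in>{1..n + i * k} - {1..n}. f (t * r - i) = 0"
      proof
        fix t assume "t \<in> {1..n + i * k} - {1..n}"
        hence t: "n < t" by auto
        have "t*r - i \<ge> t"
        proof -
          have tr: "t*r = t*(r-1) + t" using assms(3) by (cases r) auto
          have "1*(r-1) \<le> t*(r-1)" using t assms(1) by (intro mult_le_mono1) auto
          moreover have "i \<le> r - 1" using i by simp
          ultimately have "t*(r-1) \<ge> i" by linarith
          thus ?thesis using tr by linarith
        qed
        thus "f (t * r - i) = 0" using f0 t by simp
      qed
    qed auto
    finally show ?thesis .
  qed
  define h where "h = (\<lambda>(i::nat,t::nat). t*r - i)"
  define A where "A = {..<r} \<times> {1..n}"
  have inj: "inj_on h A"
  proof (rule inj_onI)
    fix x y assume x: "x \<in> A" and y: "y \<in> A" and e: "h x = h y"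
    obtain i t where xi: "x = (i,t)" by (cases x)
    obtain i' t' where yi: "y = (i',t')" by (cases y)
    have i: "i < r" "i' < r" "1 \<le> t" "1 \<le> t'" using x y xi yi A_def by auto
    have lt: "t*r - i < t'*r - i'" if "t < t'" "i < r" "i' < r" "1 \<le> t" for t t' i i'
    proof -
      have "Suc t \<le> t'" using that by simp
      hence "(Suc t)*r \<le> t'*r" by (rule mult_le_mono1)
      thus ?thesis using that by simp
    qed
    have tt: "t = t'"
      using lt[of t t' i i'] lt[of t' t i' i] i e xi yi h_def by (cases t t' rule: linorder_cases) auto
    moreover have "i = i'"
    proof -
      have "1 * r \<le> t * r" using i by (intro mult_le_mono1) auto
      hence "r \<le> t * r" by simp
      moreover have "t*r - i = t*r - i'" using e xi yi h_def tt by simp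
      ultimately show ?thesis using i by linarith
    qed
    ultimately show "x = y" using xi yi by simp
  qed
  have img: "h ` A = {1..n*r}"
  proof (rule card_subset_eq)
    show "h ` A \<subseteq> {1..n*r}"
    proof clarify
      fix x assume "x \<in> A"
      then obtain i t where it: "x = (i,t)" "i < r" "1 \<le> t" "t \<le> n" unfolding A_def by auto
      have "1 * r \<le> t * r" using it by (intro mult_le_mono1) auto
      hence "r \<le> t * r" by simp
      hence "i < t*r" using it by linarith
      moreover have "t*r \<le> n*r" using it by simp
      ultimately have "1 \<le> t*r - i" "t*r - i \<le> n*r" by linarith+
      thus "h x \<in> {1..n*r}" unfolding h_def it(1) by simp
    qed
    show "card (h ` A) = card {1..n*r}"
      using card_image[OF inj] unfolding A_def by simp
  qed simp
  have "(\<Sum>i<r. Q (r * k) (n + i * k)) = (\<Sum>i<r. \<Sum>t\<in>{1..n}. f (t*r - i))"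
    using Qi by simp
  also have "\<dots> = (\<Sum>x\<in>A. f (h x))"
    unfolding A_def h_def by (simp add: sum.cartesian_product split_def)
  also have "\<dots> = (\<Sum>s\<in>h ` A. f s)" using sum.reindex[OF inj, of f] by (simp add: comp_def)
  also have "\<dots> = (\<Sum>s\<in>{1..n}. f s)" unfolding img
  proof (rule sum.mono_neutral_right)
    show "{1..n} \<subseteq> {1..n*r}" using assms(3) by auto
    show "\<forall>s\<in>{1..n * r} - {1..n}. f s = 0" using f0 by auto
  qed simp
  finally show ?thesis using V by (rule trans[OF _ sym, rotated])
qed

end
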